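(* For every real $\alpha\ge1$ and every integer $n\ge1$, $$\sum_{k=1}^n(\alpha n)^{-\frac{k}{k+1}}\ \le\ \frac{1+e^{2/e}}{\sqrt\alpha}.$$ *)

theory Defs
  imports Complex_Main
begin

end

theory Submission
  imports Defs
begin

lemma geo_sum: "(\<Sum>k=1..n. (2/3::real)^k) = 2 - 2*(2/3)^n"
  by (induction n) (simp_all add: sum.cl_ivl_Suc)

lemma term_bound:
  fixes x :: real and k :: nat
  assumes "x \<ge> 1" and k1: "k \<ge> 1"
  shows "x powr (1/(real k+1)) \<le> 3/2 + (2/3)^k * x / 2"
proof -
  define t where "t = x powr (1/(real k+1))"
  have tpos: "t > 0" using assms by (simp add: t_def)
  have tk: "t ^ (k+1) = x"
  proof -
    have "t ^ (k+1) = t powr (real (k+1))" using tpos by (simp only: powr_realpow)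
    also have "\<dots> = x powr ((1/(real k+1)) * real (k+1))"
      unfolding t_def by (simp add: powr_powr)
    also have "(1/(real k+1)) * real (k+1) = 1" by simp
    also have "x powr 1 = x" using assms by simp
    finally show ?thesis .
  qed
  show ?thesis
  proof (cases "(2/3)*t - 1 \<le> 0")
    case True
    have "0 \<le> (2/3::real)^k*x/2" using assms by simp
    then show ?thesis using True t_def by linarith
  next
    case False
    have "1 + real (k+1) * ((2/3)*t - 1) \<le> (1 + ((2/3)*t - 1))^(k+1)"
      by (rule Bernoulli_inequality) (use tpos in simp)
    also have "\<dots> = ((2/3)*t)^(k+1)" by simp
    also have "\<dots> = (2/3)^(k+1) * t^(k+1)" by (rule power_mult_distrib)
    also have "\<dots> = (2/3)^(k+1) * x" by (simp only: tk)
    finally have b: "real (k+1) * ((2/3)*t - 1) \<le> (2/3)^(k+1) * x" by simp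
    have "2 * ((2/3)*t - 1) \<le> real (k+1) * ((2/3)*t - 1)"
      using False k1 by (intro mult_right_mono) auto
    with b have "2 * ((2/3)*t - 1) \<le> (2/3)^(k+1) * x" by linarith
    then have "t \<le> 3/2 + (2/3)^k * x / 2" by (simp add: field_simps)
    then show ?thesis by (simp add: t_def)
  qed
qed

theorem mainTheorem4:
  fixes \<alpha> :: real and n :: nat
  assumes "\<alpha> \<ge> 1" and "n \<ge> 1"
  shows "(\<Sum>k=1..n. (\<alpha> * real n) powr (- (real k / (real k + 1))))
           \<le> (1 + exp (2 / exp 1)) / sqrt \<alpha>"
proof -
  define x where "x = real n"
  have x1: "x \<ge> 1" using assms by (simp add: x_def)
  have "(\<Sum>k=1..n. (\<alpha> * real n) powr (- (real k / (real k + 1))))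
        \<le> (\<Sum>k=1..n. (1 / sqrt \<alpha>) * (3/2/x + (2/3)^k / 2))"
  proof (rule sum_mono)
    fix k assume k: "k \<in> {1..n}"
    have e1: "(\<alpha> * real n) powr (- (real k / (real k + 1)))
        = \<alpha> powr (- (real k / (real k + 1))) * x powr (- (real k / (real k + 1)))"
      using assms by (simp add: x_def powr_mult)
    have e2: "\<alpha> powr (- (real k / (real k + 1))) \<le> \<alpha> powr (-(1/2))"
      using k assms by (intro powr_mono) (auto simp: field_simps)
    have e3: "\<alpha> powr (-(1/2)) = 1 / sqrt \<alpha>"
    proof -
      have "\<alpha> powr (-(1/2)) = inverse (\<alpha> powr (1/2))" by (rule powr_minus)
      also have "\<alpha> powr (1/2) = sqrt \<alpha>" using assms by (intro powr_half_sqrt) simp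
      finally show ?thesis by (simp add: inverse_eq_divide)
    qed
    have e4: "x powr (- (real k / (real k + 1))) = x powr (1/(real k+1)) / x"
    proof -
      have "- (real k / (real k + 1)) = 1/(real k+1) - 1" by (simp add: field_simps)
      then show ?thesis using x1 by (simp add: powr_diff)
    qed
    have e5: "x powr (1/(real k+1)) / x \<le> 3/2/x + (2/3)^k / 2"
    proof -
      have "x powr (1/(real k+1)) / x \<le> (3/2 + (2/3)^k * x / 2) / x"
        using term_bound[OF x1, of k] k x1 by (intro divide_right_mono) auto
      also have "\<dots> = 3/2/x + (2/3)^k / 2" using x1 by (simp add: field_simps)
      finally show ?thesis .
    qed
    have "\<alpha> powr (- (real k / (real k + 1))) * x powr (- (real k / (real k + 1)))
       \<le> (1 / sqrt \<alpha>) * (3/2/x + (2/3)^k / 2)"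
    proof (rule mult_mono)
      show "\<alpha> powr (- (real k / (real k + 1))) \<le> 1 / sqrt \<alpha>" using e2 e3 by simp
      show "x powr (- (real k / (real k + 1))) \<le> 3/2/x + (2/3)^k / 2" using e4 e5 by simp
      show "0 \<le> 1 / sqrt \<alpha>" using assms by simp
      show "0 \<le> x powr (- (real k / (real k + 1)))" by simp
    qed
    then show "(\<alpha> * real n) powr (- (real k / (real k + 1))) \<le> 1 / sqrt \<alpha> * (3 / 2 / x + (2 / 3) ^ k / 2)"
      using e1 by simp
  qed
  also have "\<dots> = (1 / sqrt \<alpha>) * (real n * (3/2/x) + (\<Sum>k=1..n. (2/3::real)^k) / 2)"
    by (simp only: sum_distrib_left[symmetric] sum.distrib sum_divide_distrib[symmetric] sum_constant card_atLeastAtMost) simp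
  also have "\<dots> = (1 / sqrt \<alpha>) * (3/2 + (2 - 2*(2/3)^n) / 2)"
    using x1 geo_sum[of n] by (simp add: x_def)
  also have "\<dots> \<le> (1 / sqrt \<alpha>) * (5/2)"
    using assms by (intro mult_left_mono) auto
  also have "\<dots> \<le> (1 / sqrt \<alpha>) * (1 + exp (2 / exp 1))"
  proof (intro mult_left_mono)
    have e3: "exp (1::real) \<le> 3" using exp_le by simp
    have "2 / exp 1 \<ge> (2/3::real)" using e3 by (simp add: field_simps)
    then have "exp (2 / exp 1) \<ge> 1 + (2/3::real)" using exp_ge_add_one_self[of "2 / exp 1"] by linarith
    then show "5/2 \<le> 1 + exp (2 / exp (1::real))" by linarith
  qed (use assms in auto)
  finally show ?thesis by simp
qed

end
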